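(* Given a set $\mathcal{R}$ of rules on a finite set $Q$ and a subset $X\subseteq Q$, the maximum member $X^\circ$ of $\mathcal{A}(\mathcal{R})$ contained in $X$ can be computed in linear time, i.e. in time $O(l(\mathcal{R}))$.
   Context: A rule on $Q$ is a pair $(A,q)$ with $A\subseteq Q$, $q\in Q$; it accepts $Y\subseteq Q$ if $q\in Y$ implies $Y\cap A\neq\emptyset$. $\mathcal{K}(\mathcal{R})$ is the family of subsets accepted by all rules of $\mathcal{R}$, and $\mathcal{A}(\mathcal{R})$ is the family of $K\in\mathcal{K}(\mathcal{R})$ for which there is a sequence $\emptyset=Y_0\subseteq\dots\subseteq Y_k=K$ of members of $\mathcal{K}(\mathcal{R})$ with $|Y_{i+1}\setminus Y_i|=1$. $\mathcal{A}(\mathcal{R})$ is union-closed and contains $\emptyset$, so for each $X\subseteq Q$ there is a unique maximal member $X^\circ$ of $\mathcal{A}(\mathcal{R})$ contained in $X$. The input size is $l(\mathcal{R})=\sum_{(A,q)\in\mathcal{R}}(|A|+1)$, assumed to satisfy $l(\mathcal{R})\ge|Q|$. *)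

theory Defs
  imports Main
begin

type_synonym 'a rule = "'a set \<times> 'a"

definition accepts :: "'a rule \<Rightarrow> 'a set \<Rightarrow> bool" where
  "accepts r Y \<longleftrightarrow> (snd r \<in> Y \<longrightarrow> Y \<inter> fst r \<noteq> {})"

definition rule_on :: "'a set \<Rightarrow> 'a rule \<Rightarrow> bool" where
  "rule_on Q r \<longleftrightarrow> fst r \<subseteq> Q \<and> snd r \<in> Q"

definition Kfam :: "'a set \<Rightarrow> 'a rule set \<Rightarrow> 'a set set" where
  "Kfam Q R = {Y. Y \<subseteq> Q \<and> (\<forall>r\<in>R. accepts r Y)}"

definition Afam :: "'a set \<Rightarrow> 'a rule set \<Rightarrow> 'a set set" where
  "Afam Q R = {K. K \<in> Kfam Q R \<and>
     (\<exists>(Ys :: nat \<Rightarrow> 'a set) k. Ys 0 = {} \<and> Ys k = K \<and>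
        (\<forall>i\<le>k. Ys i \<in> Kfam Q R) \<and>
        (\<forall>i<k. Ys i \<subseteq> Ys (Suc i) \<and> card (Ys (Suc i) - Ys i) = 1))}"

definition interior :: "'a set \<Rightarrow> 'a rule set \<Rightarrow> 'a set \<Rightarrow> 'a set" where
  "interior Q R X = (THE Y. Y \<in> Afam Q R \<and> Y \<subseteq> X \<and>
      (\<forall>Z\<in>Afam Q R. Z \<subseteq> X \<longrightarrow> Z \<subseteq> Y))"

definition rsize :: "'a rule set \<Rightarrow> nat" where
  "rsize R = (\<Sum>r\<in>R. card (fst r) + 1)"

text \<open>The input is given as a list qs enumerating Q, a list rs of rules, each
  with its body as a list, and the set X (O(1) membership test, i.e. a bit array).
  Each machine step performs O(1) RAM operations (array reads/writes indexed by
  elements of Q or rule indices, list cons/uncons).  Running time = number of steps.\<close>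

datatype 'a phase = Init1 nat nat bool | Init2 nat | Loop | Scan "nat list" | Done

record 'a mstate =
  st_phase :: "'a phase"
  st_occ :: "'a \<Rightarrow> nat list"
  st_cnt :: "'a \<Rightarrow> nat"
  st_counted :: "nat \<Rightarrow> bool"
  st_sat :: "nat \<Rightarrow> bool"
  st_queue :: "'a list"
  st_Y :: "'a set"

definition init_state :: "'a mstate" where
  "init_state = \<lparr>st_phase = Init1 0 0 False, st_occ = (\<lambda>_. []), st_cnt = (\<lambda>_. 0),
     st_counted = (\<lambda>_. False), st_sat = (\<lambda>_. False), st_queue = [], st_Y = {}\<rparr>"

definition mstep :: "'a list \<Rightarrow> ('a list \<times> 'a) list \<Rightarrow> 'a set \<Rightarrow> 'a mstate \<Rightarrow> 'a mstate" where
  "mstep qs rs X s = (case st_phase s of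
     Init1 i j found \<Rightarrow>
       (if i < length rs then
          (let as = fst (rs ! i); q = snd (rs ! i) in
           if j < length as then
             (let a = as ! j in
              s\<lparr>st_phase := Init1 i (Suc j) (found \<or> a = q),
                st_occ := (st_occ s)(a := i # st_occ s a)\<rparr>)
           else if found then s\<lparr>st_phase := Init1 (Suc i) 0 False\<rparr>
           else s\<lparr>st_phase := Init1 (Suc i) 0 False,
                   st_cnt := (st_cnt s)(q := Suc (st_cnt s q)),
                   st_counted := (st_counted s)(i := True)\<rparr>)
        else s\<lparr>st_phase := Init2 0\<rparr>)
   | Init2 k \<Rightarrow>
       (if k < length qs then
          (let a = qs ! k in
           s\<lparr>st_phase := Init2 (Suc k),
             st_queue := (if a \<in> X \<and> st_cnt s a = 0 then a # st_queue s else st_queue s)\<rparr>)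
        else s\<lparr>st_phase := Loop\<rparr>)
   | Loop \<Rightarrow>
       (case st_queue s of
          [] \<Rightarrow> s\<lparr>st_phase := Done\<rparr>
        | p # ps \<Rightarrow>
            (if p \<in> st_Y s then s\<lparr>st_queue := ps\<rparr>
             else s\<lparr>st_queue := ps, st_Y := insert p (st_Y s), st_phase := Scan (st_occ s p)\<rparr>))
   | Scan is \<Rightarrow>
       (case is of
          [] \<Rightarrow> s\<lparr>st_phase := Loop\<rparr>
        | i # is' \<Rightarrow>
            (if st_counted s i \<and> \<not> st_sat s i then
               (let q = snd (rs ! i); c' = st_cnt s q - 1 in
                s\<lparr>st_phase := Scan is', st_sat := (st_sat s)(i := True),
                  st_cnt := (st_cnt s)(q := c'),
                  st_queue := (if c' = 0 \<and> q \<in> X \<and> q \<notin> st_Y s then q # st_queue s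
                               else st_queue s)\<rparr>)
             else s\<lparr>st_phase := Scan is'\<rparr>))
   | Done \<Rightarrow> s)"

definition run :: "'a list \<Rightarrow> ('a list \<times> 'a) list \<Rightarrow> 'a set \<Rightarrow> nat \<Rightarrow> 'a mstate" where
  "run qs rs X n = (mstep qs rs X ^^ n) init_state"

definition rules_of :: "('a list \<times> 'a) list \<Rightarrow> 'a rule set" where
  "rules_of rs = (\<lambda>(as, q). (set as, q)) ` set rs"

end

theory Submission
  imports Defs
begin


lemma Afam_empty: "{} \<in> Afam Q RS"
  unfolding Afam_def Kfam_def accepts_def
  by (auto intro!: exI[of _ "\<lambda>_. {}"] exI[of _ 0])

lemma Afam_insert:
  assumes "Y \<in> Afam Q RS" "insert p Y \<in> Kfam Q RS" "p \<notin> Y"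
  shows "insert p Y \<in> Afam Q RS"
proof -
  from assms(1) obtain Ys k where c: "Ys 0 = {}" "Ys k = Y" "\<forall>i\<le>k. Ys i \<in> Kfam Q RS"
    "\<forall>i<k. Ys i \<subseteq> Ys (Suc i) \<and> card (Ys (Suc i) - Ys i) = 1"
    unfolding Afam_def by blast
  define Zs where "Zs = (\<lambda>i. if i \<le> k then Ys i else insert p Y)"
  have "Zs 0 = {}" "Zs (Suc k) = insert p Y" using c by (auto simp: Zs_def)
  moreover have "\<forall>i\<le>Suc k. Zs i \<in> Kfam Q RS" using c assms(2) by (auto simp: Zs_def le_Suc_eq)
  moreover have "\<forall>i<Suc k. Zs i \<subseteq> Zs (Suc i) \<and> card (Zs (Suc i) - Zs i) = 1"
  proof (intro allI impI)
    fix i assume "i < Suc k"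
    then consider "i < k" | "i = k" by linarith
    then show "Zs i \<subseteq> Zs (Suc i) \<and> card (Zs (Suc i) - Zs i) = 1"
    proof cases
      case 1 then show ?thesis using c by (auto simp: Zs_def)
    next
      case 2
      have "insert p Y - Y = {p}" using assms(3) by auto
      then show ?thesis using 2 c by (auto simp: Zs_def)
    qed
  qed
  ultimately show ?thesis using assms(2) unfolding Afam_def by blast
qed

lemma interior_char:
  assumes YA: "Y \<in> Afam Q RS" and YX: "Y \<subseteq> X"
    and cmp: "\<forall>z\<in>X - Y. \<exists>A. (A, z) \<in> RS \<and> z \<notin> A \<and> A \<inter> Y = {}"
  shows "interior Q RS X = Y"
proof -
  have max: "Z \<subseteq> Y" if ZA: "Z \<in> Afam Q RS" and ZX: "Z \<subseteq> X" for Z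
  proof -
    from ZA obtain Ys k where c: "Ys 0 = {}" "Ys k = Z" "\<forall>i\<le>k. Ys i \<in> Kfam Q RS"
      "\<forall>i<k. Ys i \<subseteq> Ys (Suc i) \<and> card (Ys (Suc i) - Ys i) = 1"
      unfolding Afam_def by blast
    have mono: "Ys j \<subseteq> Ys k" if "j \<le> k" for j
      using that
    proof (induction j rule: inc_induct)
      case base then show ?case by simp
    next
      case (step n) then show ?case using c(4) by blast
    qed
    have "Ys j \<subseteq> Y" if "j \<le> k" for j
      using that
    proof (induction j)
      case 0 then show ?case using c by simp
    next
      case (Suc j)
      then have jk: "j < k" by simp
      with c(4) have sub: "Ys j \<subseteq> Ys (Suc j)" and cd: "card (Ys (Suc j) - Ys j) = 1" by auto
      from cd obtain z where z: "Ys (Suc j) - Ys j = {z}" by (auto simp: card_Suc_eq)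
      have IH: "Ys j \<subseteq> Y" using Suc jk by simp
      have eq: "Ys (Suc j) = insert z (Ys j)" using z sub by blast
      show ?case
      proof (rule ccontr)
        assume "\<not> Ys (Suc j) \<subseteq> Y"
        then have zY: "z \<notin> Y" using eq IH by auto
        have "z \<in> X" using mono[of "Suc j"] jk c(2) ZX eq by auto
        with cmp zY obtain A where A: "(A, z) \<in> RS" "z \<notin> A" "A \<inter> Y = {}" by blast
        have "Ys (Suc j) \<in> Kfam Q RS" using c(3) jk by simp
        then have "accepts (A, z) (Ys (Suc j))" using A(1) unfolding Kfam_def by blast
        then have "Ys (Suc j) \<inter> A \<noteq> {}" using eq unfolding accepts_def by auto
        then show False using A IH eq by auto
      qed
    qed
    then show ?thesis using c(2) by blast
  qed
  show ?thesis unfolding interior_def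
    by (rule the_equality) (use YA YX max in \<open>auto intro: subset_antisym\<close>)
qed




locale alg =
  fixes qs :: "'a list" and rs :: "('a list \<times> 'a) list" and X :: "'a set"
  assumes dq: "distinct qs" and das: "\<forall>(as, q) \<in> set rs. distinct as"
    and dr: "distinct (map (\<lambda>(as, q). (set as, q)) rs)" and XQ: "X \<subseteq> set qs"
begin

abbreviation "f \<equiv> mstep qs rs X"

definition occI :: "nat \<Rightarrow> 'a \<Rightarrow> nat list" where
  "occI i a = rev (filter (\<lambda>k. a \<in> set (fst (rs!k))) [0..<i])"
definition cntI :: "nat \<Rightarrow> 'a \<Rightarrow> nat" where
  "cntI i q = card {k. k < i \<and> snd (rs!k) = q \<and> q \<notin> set (fst (rs!k))}"
definition cntdI :: "nat \<Rightarrow> nat \<Rightarrow> bool" where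
  "cntdI i k = (k < i \<and> snd (rs!k) \<notin> set (fst (rs!k)))"

definition S1 :: "nat \<Rightarrow> nat \<Rightarrow> 'a mstate" where
  "S1 i j = \<lparr>st_phase = Init1 i j (snd (rs!i) \<in> set (take j (fst (rs!i)))),
     st_occ = (\<lambda>a. (if a \<in> set (take j (fst (rs!i))) then [i] else []) @ occI i a),
     st_cnt = cntI i, st_counted = cntdI i, st_sat = (\<lambda>_. False), st_queue = [], st_Y = {}\<rparr>"

lemma das': "i < length rs \<Longrightarrow> distinct (fst (rs!i))"
  using das nth_mem by (cases "rs!i") fastforce

lemma init_S1: "init_state = S1 0 0"
  by (simp add: init_state_def S1_def occI_def cntI_def cntdI_def fun_eq_iff)

lemma step_in:
  assumes "i < length rs" "j < length (fst (rs!i))"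
  shows "f (S1 i j) = S1 i (Suc j)"
proof -
  have d: "distinct (fst (rs!i))" using das' assms(1) .
  have nt: "fst (rs!i) ! j \<notin> set (take j (fst (rs!i)))"
    using d assms(2) by (simp add: in_set_conv_nth nth_eq_iff_index_eq)
  have tk: "take (Suc j) (fst (rs!i)) = take j (fst (rs!i)) @ [fst (rs!i) ! j]"
    using assms(2) by (simp add: take_Suc_conv_app_nth)
  show ?thesis
    using assms nt unfolding S1_def mstep_def
    by (auto simp: Let_def tk fun_eq_iff)
qed

lemma step_out:
  assumes "i < length rs"
  shows "f (S1 i (length (fst (rs!i)))) = S1 (Suc i) 0"
proof -
  have o: "occI (Suc i) a = (if a \<in> set (fst (rs!i)) then [i] else []) @ occI i a" for a
    by (simp add: occI_def)
  have c1: "cntI (Suc i) = (if snd (rs!i) \<in> set (fst (rs!i)) then cntI i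
      else (cntI i)(snd (rs!i) := Suc (cntI i (snd (rs!i)))))"
  proof -
    have "{k. k < Suc i \<and> snd (rs!k) = q \<and> q \<notin> set (fst (rs!k))} =
      (if snd (rs!i) = q \<and> q \<notin> set (fst (rs!i)) then insert i else id)
        {k. k < i \<and> snd (rs!k) = q \<and> q \<notin> set (fst (rs!k))}" for q
      by (auto simp: less_Suc_eq)
    then show ?thesis by (auto simp: cntI_def fun_eq_iff)
  qed
  have c2: "cntdI (Suc i) = (if snd (rs!i) \<in> set (fst (rs!i)) then cntdI i
      else (cntdI i)(i := True))"
    by (auto simp: cntdI_def fun_eq_iff less_Suc_eq)
  show ?thesis
    using assms unfolding S1_def mstep_def
    by (auto simp: Let_def o c1 c2 fun_eq_iff)
qed

lemma steps_in:
  assumes "i < length rs" "j \<le> length (fst (rs!i))"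
  shows "(f ^^ j) (S1 i 0) = S1 i j"
  using assms(2)
proof (induction j)
  case 0 then show ?case by simp
next
  case (Suc j) then show ?case using step_in[OF assms(1)] by simp
qed

definition T1 :: "nat \<Rightarrow> nat" where
  "T1 i = (\<Sum>k<i. length (fst (rs!k)) + 1)"

lemma steps_init1: "i \<le> length rs \<Longrightarrow> (f ^^ T1 i) init_state = S1 i 0"
proof (induction i)
  case 0 then show ?case by (simp add: T1_def init_S1)
next
  case (Suc i)
  then have il: "i < length rs" by simp
  have "T1 (Suc i) = Suc (length (fst (rs!i))) + T1 i" by (simp add: T1_def)
  then have "(f ^^ T1 (Suc i)) init_state = f ((f ^^ length (fst (rs!i))) ((f ^^ T1 i) init_state))"
    by (simp add: funpow_add)
  also have "\<dots> = S1 (Suc i) 0"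
    using Suc il by (simp add: steps_in step_out)
  finally show ?case .
qed

definition S2 :: "nat \<Rightarrow> 'a mstate" where
  "S2 k = \<lparr>st_phase = Init2 k, st_occ = occI (length rs), st_cnt = cntI (length rs),
     st_counted = cntdI (length rs), st_sat = (\<lambda>_. False),
     st_queue = rev (filter (\<lambda>a. a \<in> X \<and> cntI (length rs) a = 0) (take k qs)), st_Y = {}\<rparr>"

lemma step_12: "f (S1 (length rs) 0) = S2 0"
  by (simp add: S1_def S2_def mstep_def fun_eq_iff)

lemma step_2: "k < length qs \<Longrightarrow> f (S2 k) = S2 (Suc k)"
  by (simp add: S2_def mstep_def Let_def take_Suc_conv_app_nth)

lemma steps_2: "k \<le> length qs \<Longrightarrow> (f ^^ k) (S2 0) = S2 k"
  by (induction k) (auto simp: step_2)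

definition S3 :: "'a mstate" where
  "S3 = \<lparr>st_phase = Loop, st_occ = occI (length rs), st_cnt = cntI (length rs),
     st_counted = cntdI (length rs), st_sat = (\<lambda>_. False),
     st_queue = rev (filter (\<lambda>a. a \<in> X \<and> cntI (length rs) a = 0) qs), st_Y = {}\<rparr>"

lemma step_23: "f (S2 (length qs)) = S3"
  by (simp add: S2_def S3_def mstep_def)

lemma run_S3: "run qs rs X (T1 (length rs) + 1 + length qs + 1) = S3"
proof -
  have "run qs rs X (T1 (length rs) + 1 + length qs + 1) =
     f ((f ^^ length qs) (f ((f ^^ T1 (length rs)) init_state)))"
  proof -
    have e: "T1 (length rs) + 1 + length qs + 1 = Suc (length qs + Suc (T1 (length rs)))" by simp
    show ?thesis unfolding run_def e funpow.simps(2) funpow_add comp_def ..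
  qed
  also have "\<dots> = S3" by (simp add: steps_init1 step_12 steps_2 step_23)
  finally show ?thesis .
qed

end



context alg begin

abbreviation "RL \<equiv> length rs"
definition body :: "nat \<Rightarrow> 'a set" where "body k = set (fst (rs!k))"
definition head :: "nat \<Rightarrow> 'a" where "head k = snd (rs!k)"
abbreviation "occ0 \<equiv> occI RL"
abbreviation "cntd \<equiv> cntdI RL"

lemma set_occ0: "set (occ0 p) = {k. k < RL \<and> p \<in> body k}"
  by (auto simp: occI_def body_def)

lemma cntd_lt: "cntd k \<Longrightarrow> k < RL" by (simp add: cntdI_def)

lemma fin_cntd: "finite {k. cntd k \<and> P k}"
  by (rule finite_subset[of _ "{..<RL}"]) (auto simp: cntdI_def)

lemma rules_ofE: "r \<in> rules_of rs \<Longrightarrow> \<exists>k<RL. r = (body k, head k)"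
proof -
  assume "r \<in> rules_of rs"
  then obtain x where x: "x \<in> set rs" "r = (set (fst x), snd x)"
    unfolding rules_of_def by (auto split: prod.splits)
  then obtain k where "k < RL" "rs ! k = x" by (auto simp: in_set_conv_nth)
  then show ?thesis using x by (auto simp: body_def head_def)
qed

lemma rules_ofI: "k < RL \<Longrightarrow> (body k, head k) \<in> rules_of rs"
  unfolding rules_of_def body_def head_def
  by (rule image_eqI[of _ _ "rs!k"]) (auto split: prod.splits)

definition Inv :: "'a mstate \<Rightarrow> bool" where
 "Inv s \<longleftrightarrow>
 (st_phase s = Loop \<or> (\<exists>is. st_phase s = Scan is)) \<and>
 st_occ s = occ0 \<and> st_counted s = cntd \<and>
 (\<forall>k. st_sat s k \<longrightarrow> cntd k \<and> body k \<inter> st_Y s \<noteq> {}) \<and>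
 (\<forall>q. st_cnt s q = card {k. cntd k \<and> \<not> st_sat s k \<and> head k = q}) \<and>
 (\<forall>k. cntd k \<and> body k \<inter> st_Y s \<noteq> {} \<longrightarrow> st_sat s k \<or> (\<exists>is. st_phase s = Scan is \<and> k \<in> set is)) \<and>
 (\<forall>is. st_phase s = Scan is \<longrightarrow> (\<forall>k\<in>set is. k < RL \<and> body k \<inter> st_Y s \<noteq> {})) \<and>
 (\<forall>x. x \<in> X \<and> x \<notin> st_Y s \<and> st_cnt s x = 0 \<longrightarrow> x \<in> set (st_queue s)) \<and>
 (\<forall>x \<in> set (st_queue s). x \<in> X \<and> st_cnt s x = 0) \<and>
 st_Y s \<subseteq> X \<and> st_Y s \<in> Afam (set qs) (rules_of rs)"

lemma InvD: assumes "Inv s" shows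
 "st_phase s = Loop \<or> (\<exists>is. st_phase s = Scan is)" "st_occ s = occ0" "st_counted s = cntd"
 "\<And>k. st_sat s k \<Longrightarrow> cntd k" "\<And>k. st_sat s k \<Longrightarrow> body k \<inter> st_Y s \<noteq> {}"
 "\<And>q. st_cnt s q = card {k. cntd k \<and> \<not> st_sat s k \<and> head k = q}"
 "\<And>k. cntd k \<Longrightarrow> body k \<inter> st_Y s \<noteq> {} \<Longrightarrow> st_sat s k \<or> (\<exists>is. st_phase s = Scan is \<and> k \<in> set is)"
 "\<And>is k. st_phase s = Scan is \<Longrightarrow> k \<in> set is \<Longrightarrow> k < RL"
 "\<And>is k. st_phase s = Scan is \<Longrightarrow> k \<in> set is \<Longrightarrow> body k \<inter> st_Y s \<noteq> {}"
 "\<And>x. x \<in> X \<Longrightarrow> x \<notin> st_Y s \<Longrightarrow> st_cnt s x = 0 \<Longrightarrow> x \<in> set (st_queue s)"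
 "\<And>x. x \<in> set (st_queue s) \<Longrightarrow> x \<in> X"
 "\<And>x. x \<in> set (st_queue s) \<Longrightarrow> st_cnt s x = 0"
 "st_Y s \<subseteq> X" "st_Y s \<in> Afam (set qs) (rules_of rs)"
  using assms unfolding Inv_def by blast+

lemma InvI: assumes
 "st_phase s = Loop \<or> (\<exists>is. st_phase s = Scan is)" "st_occ s = occ0" "st_counted s = cntd"
 "\<And>k. st_sat s k \<Longrightarrow> cntd k" "\<And>k. st_sat s k \<Longrightarrow> body k \<inter> st_Y s \<noteq> {}"
 "\<And>q. st_cnt s q = card {k. cntd k \<and> \<not> st_sat s k \<and> head k = q}"
 "\<And>k. cntd k \<Longrightarrow> body k \<inter> st_Y s \<noteq> {} \<Longrightarrow> st_sat s k \<or> (\<exists>is. st_phase s = Scan is \<and> k \<in> set is)"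
 "\<And>is k. st_phase s = Scan is \<Longrightarrow> k \<in> set is \<Longrightarrow> k < RL"
 "\<And>is k. st_phase s = Scan is \<Longrightarrow> k \<in> set is \<Longrightarrow> body k \<inter> st_Y s \<noteq> {}"
 "\<And>x. x \<in> X \<Longrightarrow> x \<notin> st_Y s \<Longrightarrow> st_cnt s x = 0 \<Longrightarrow> x \<in> set (st_queue s)"
 "\<And>x. x \<in> set (st_queue s) \<Longrightarrow> x \<in> X"
 "\<And>x. x \<in> set (st_queue s) \<Longrightarrow> st_cnt s x = 0"
 "st_Y s \<subseteq> X" "st_Y s \<in> Afam (set qs) (rules_of rs)"
 shows "Inv s"
  using assms unfolding Inv_def by blast

definition M :: "'a mstate \<Rightarrow> nat" where
 "M s = 1 + length (st_queue s) + card {k. cntd k \<and> \<not> st_sat s k}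
    + (\<Sum>a\<in>set qs - st_Y s. length (occ0 a) + 1)
    + (case st_phase s of Scan is \<Rightarrow> length is + 1 | _ \<Rightarrow> 0)"

lemma caseA:
  assumes I: "Inv s" and ph: "st_phase s = Loop" and qu: "st_queue s = p # ps" and pY: "p \<in> st_Y s"
  shows "Inv (f s) \<and> M (f s) < M s"
proof -
  note D = InvD[OF I]
  have fs: "f s = s\<lparr>st_queue := ps\<rparr>" using ph qu pY by (simp add: mstep_def)
  have "Inv (f s)" unfolding fs
  proof (rule InvI, simp_all add: ph)
    show "x \<in> set ps" if "x \<in> X" "x \<notin> st_Y s" "st_cnt s x = 0" for x
      using D(10)[OF that] qu that(2) pY by auto
    show "st_sat s k" if "cntd k" "body k \<inter> st_Y s \<noteq> {}" for k
      using D(7)[OF that] ph by simp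
    show "x \<in> X" "st_cnt s x = 0" if "x \<in> set ps" for x
      using D(11,12)[of x] that qu by auto
  qed (rule D; assumption)+
  moreover have "M (f s) < M s" unfolding fs M_def using qu by simp
  ultimately show ?thesis by simp
qed

lemma caseB:
  assumes I: "Inv s" and ph: "st_phase s = Loop" and qu: "st_queue s = p # ps" and pY: "p \<notin> st_Y s"
  shows "Inv (f s) \<and> M (f s) < M s"
proof -
  note D = InvD[OF I]
  have fs: "f s = s\<lparr>st_queue := ps, st_Y := insert p (st_Y s), st_phase := Scan (occ0 p)\<rparr>"
    using ph qu pY D(2) by (simp add: mstep_def)
  have sel: "st_phase (f s) = Scan (occ0 p)" "st_queue (f s) = ps" "st_Y (f s) = insert p (st_Y s)"
    "st_occ (f s) = st_occ s" "st_counted (f s) = st_counted s" "st_sat (f s) = st_sat s"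
    "st_cnt (f s) = st_cnt s" by (simp_all add: fs)
  have pX: "p \<in> X" and cp: "st_cnt s p = 0" using D(11,12) qu by auto
  have pQ: "p \<in> set qs" using pX XQ by auto
  have YK: "st_Y s \<in> Kfam (set qs) (rules_of rs)" using D(14) by (auto simp: Afam_def)
  have acc: "accepts (body k, head k) (insert p (st_Y s))" if kl: "k < RL" for k
  proof (cases "head k = p")
    case hp: True
    show ?thesis
    proof (cases "cntd k")
      case True
      have "card {k. cntd k \<and> \<not> st_sat s k \<and> head k = p} = 0" using D(6)[of p] cp by simp
      then have "st_sat s k" using True hp fin_cntd[of "\<lambda>k. \<not> st_sat s k \<and> head k = p"] by auto
      then have "body k \<inter> st_Y s \<noteq> {}" using D(5) by blast
      then show ?thesis by (auto simp: accepts_def)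
    next
      case False
      then have "p \<in> body k" using kl hp by (simp add: cntdI_def body_def head_def)
      then show ?thesis by (auto simp: accepts_def)
    qed
  next
    case False
    have "accepts (body k, head k) (st_Y s)" using YK rules_ofI[OF kl] unfolding Kfam_def by blast
    then show ?thesis using False unfolding accepts_def by auto
  qed
  have K: "insert p (st_Y s) \<in> Kfam (set qs) (rules_of rs)"
    unfolding Kfam_def
  proof (intro CollectI conjI ballI)
    show "insert p (st_Y s) \<subseteq> set qs" using D(13) pQ XQ by auto
  next
    fix r assume r: "r \<in> rules_of rs"
    then obtain k where k: "k < RL" "r = (body k, head k)" using rules_ofE by blast
    then show "accepts r (insert p (st_Y s))" using acc by simp
  qed
  have AF: "insert p (st_Y s) \<in> Afam (set qs) (rules_of rs)"
    using Afam_insert[OF D(14) K pY] .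
  have inv: "Inv (f s)"
  proof (rule InvI, simp_all only: sel)
    show "Scan (occ0 p) = Loop \<or> (\<exists>is. Scan (occ0 p) = Scan is)" by simp
    show "body k \<inter> insert p (st_Y s) \<noteq> {}" if "st_sat s k" for k using D(5)[OF that] by blast
    show "st_sat s k \<or> (\<exists>is. Scan (occ0 p) = Scan is \<and> k \<in> set is)"
      if "cntd k" "body k \<inter> insert p (st_Y s) \<noteq> {}" for k
    proof (cases "p \<in> body k")
      case True then show ?thesis using cntd_lt[OF that(1)] by (simp add: set_occ0)
    next
      case False then have "body k \<inter> st_Y s \<noteq> {}" using that(2) by blast
      then show ?thesis using D(7)[OF that(1)] ph by simp
    qed
    show "k < RL" if "Scan (occ0 p) = Scan js" "k \<in> set js" for js k using that set_occ0[of p] by auto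
    show "body k \<inter> insert p (st_Y s) \<noteq> {}" if "Scan (occ0 p) = Scan js" "k \<in> set js" for js k
      using that set_occ0[of p] by auto
    show "x \<in> set ps" if "x \<in> X" "x \<notin> insert p (st_Y s)" "st_cnt s x = 0" for x
      using D(10)[of x] that qu by auto
    show "x \<in> X" "st_cnt s x = 0" if "x \<in> set ps" for x
      using D(11,12)[of x] that qu by auto
    show "insert p (st_Y s) \<subseteq> X" using D(13) pX by blast
    show "insert p (st_Y s) \<in> Afam (set qs) (rules_of rs)" by (rule AF)
  qed (rule D; assumption)+
  have sm: "(\<Sum>a\<in>set qs - st_Y s. length (occ0 a) + 1) =
      (length (occ0 p) + 1) + (\<Sum>a\<in>set qs - insert p (st_Y s). length (occ0 a) + 1)"
  proof -
    have "set qs - insert p (st_Y s) = (set qs - st_Y s) - {p}" by auto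
    then show ?thesis using pQ pY by (simp add: sum.remove)
  qed
  have "M (f s) < M s" unfolding M_def sel using ph qu sm by simp
  then show ?thesis using inv by simp
qed

lemma caseC:
  assumes I: "Inv s" and ph: "st_phase s = Scan (i # is')" and ci: "cntd i" and si: "\<not> st_sat s i"
  shows "Inv (f s) \<and> M (f s) < M s"
proof -
  note D = InvD[OF I]
  define q where "q = head i"
  define c' where "c' = st_cnt s q - 1"
  define Q' where "Q' = (if c' = 0 \<and> q \<in> X \<and> q \<notin> st_Y s then q # st_queue s else st_queue s)"
  have fs: "f s = s\<lparr>st_phase := Scan is', st_sat := (st_sat s)(i := True),
                  st_cnt := (st_cnt s)(q := c'), st_queue := Q'\<rparr>"
    using ph ci si D(3) by (simp add: mstep_def Let_def q_def c'_def head_def Q'_def)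
  have sel: "st_phase (f s) = Scan is'" "st_queue (f s) = Q'" "st_Y (f s) = st_Y s"
    "st_occ (f s) = st_occ s" "st_counted (f s) = st_counted s" "st_sat (f s) = (st_sat s)(i := True)"
    "st_cnt (f s) = (st_cnt s)(q := c')" by (simp_all add: fs)
  define Sq where "Sq = {k. cntd k \<and> \<not> st_sat s k \<and> head k = q}"
  have finSq: "finite Sq" unfolding Sq_def by (rule fin_cntd)
  have iSq: "i \<in> Sq" using ci si by (simp add: Sq_def q_def)
  have cq: "st_cnt s q = card Sq" using D(6)[of q] by (simp add: Sq_def)
  have cqpos: "st_cnt s q \<ge> 1" using cq finSq iSq by (metis One_nat_def Suc_leI card_gt_0_iff empty_iff)
  have newS: "{k. cntd k \<and> \<not> ((st_sat s)(i := True)) k \<and> head k = q'} =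
     (if q' = q then Sq - {i} else {k. cntd k \<and> \<not> st_sat s k \<and> head k = q'})" for q'
    by (auto simp: Sq_def q_def)
  have cnt': "((st_cnt s)(q := c')) q' = card {k. cntd k \<and> \<not> ((st_sat s)(i := True)) k \<and> head k = q'}" for q'
  proof (cases "q' = q")
    case True then show ?thesis unfolding newS c'_def using cq finSq iSq by simp
  next
    case False then show ?thesis unfolding newS using D(6)[of q'] by simp
  qed
  have bi: "body i \<inter> st_Y s \<noteq> {}" using D(9)[OF ph] by simp
  have inv: "Inv (f s)"
  proof (rule InvI, simp_all only: sel)
    show "Scan is' = Loop \<or> (\<exists>is. Scan is' = Scan is)" by simp
    show "cntd k" if "((st_sat s)(i := True)) k" for k using that D(4) ci by (cases "k = i") auto
    show "body k \<inter> st_Y s \<noteq> {}" if "((st_sat s)(i := True)) k" for k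
      using that D(5) bi by (cases "k = i") auto
    show "((st_cnt s)(q := c')) q' = card {k. cntd k \<and> \<not> ((st_sat s)(i := True)) k \<and> head k = q'}" for q'
      by (rule cnt')
    show "((st_sat s)(i := True)) k \<or> (\<exists>is. Scan is' = Scan is \<and> k \<in> set is)"
      if "cntd k" "body k \<inter> st_Y s \<noteq> {}" for k
      using D(7)[OF that] ph by auto
    show "k < RL" if "Scan is' = Scan js" "k \<in> set js" for js k using that D(8)[OF ph] by auto
    show "body k \<inter> st_Y s \<noteq> {}" if "Scan is' = Scan js" "k \<in> set js" for js k
      using that D(9)[OF ph] by auto
    show "x \<in> set Q'" if "x \<in> X" "x \<notin> st_Y s" "((st_cnt s)(q := c')) x = 0" for x
    proof (cases "x = q")
      case True then show ?thesis using that by (simp add: Q'_def)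
    next
      case False then show ?thesis using that D(10)[of x] by (auto simp: Q'_def)
    qed
    show "x \<in> X" if "x \<in> set Q'" for x
      using that D(11)[of x] by (auto simp: Q'_def split: if_splits)
    show "((st_cnt s)(q := c')) x = 0" if "x \<in> set Q'" for x
    proof (cases "x = q")
      case True
      then have "c' = 0"
        using that D(12)[of q] cqpos by (auto simp: Q'_def split: if_splits)
      then show ?thesis using True by simp
    next
      case False then show ?thesis using that D(12)[of x] by (auto simp: Q'_def split: if_splits)
    qed
  qed (rule D; assumption)+
  have U: "{k. cntd k \<and> \<not> ((st_sat s)(i := True)) k} = {k. cntd k \<and> \<not> st_sat s k} - {i}" by auto
  have finU: "finite {k. cntd k \<and> \<not> st_sat s k}" by (rule fin_cntd)
  have Ui: "i \<in> {k. cntd k \<and> \<not> st_sat s k}" using ci si by simp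
  have cU: "card {k. cntd k \<and> \<not> ((st_sat s)(i := True)) k} + 1 = card {k. cntd k \<and> \<not> st_sat s k}"
    unfolding U using finU Ui by (metis card_Suc_Diff1 Suc_eq_plus1)
  have lq: "length Q' \<le> length (st_queue s) + 1" by (simp add: Q'_def)
  have "M (f s) < M s" unfolding M_def sel using ph cU lq by simp
  then show ?thesis using inv by simp
qed

lemma caseD:
  assumes I: "Inv s" and ph: "st_phase s = Scan (i # is')" and ci: "\<not> (cntd i \<and> \<not> st_sat s i)"
  shows "Inv (f s) \<and> M (f s) < M s"
proof -
  note D = InvD[OF I]
  have fs: "f s = s\<lparr>st_phase := Scan is'\<rparr>"
    using ph ci D(3) by (auto simp: mstep_def)
  have sel: "st_phase (f s) = Scan is'" "st_queue (f s) = st_queue s" "st_Y (f s) = st_Y s"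
    "st_occ (f s) = st_occ s" "st_counted (f s) = st_counted s" "st_sat (f s) = st_sat s"
    "st_cnt (f s) = st_cnt s" by (simp_all add: fs)
  have inv: "Inv (f s)"
  proof (rule InvI, simp_all only: sel)
    show "Scan is' = Loop \<or> (\<exists>is. Scan is' = Scan is)" by simp
    show "st_sat s k \<or> (\<exists>is. Scan is' = Scan is \<and> k \<in> set is)"
      if "cntd k" "body k \<inter> st_Y s \<noteq> {}" for k
      using D(7)[OF that] ph ci that(1) by auto
    show "k < RL" if "Scan is' = Scan js" "k \<in> set js" for js k using that D(8)[OF ph] by auto
    show "body k \<inter> st_Y s \<noteq> {}" if "Scan is' = Scan js" "k \<in> set js" for js k
      using that D(9)[OF ph] by auto
  qed (rule D; assumption)+
  moreover have "M (f s) < M s" unfolding M_def sel using ph by simp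
  ultimately show ?thesis by simp
qed

lemma caseE:
  assumes I: "Inv s" and ph: "st_phase s = Scan []"
  shows "Inv (f s) \<and> M (f s) < M s"
proof -
  note D = InvD[OF I]
  have fs: "f s = s\<lparr>st_phase := Loop\<rparr>" using ph by (simp add: mstep_def)
  have sel: "st_phase (f s) = Loop" "st_queue (f s) = st_queue s" "st_Y (f s) = st_Y s"
    "st_occ (f s) = st_occ s" "st_counted (f s) = st_counted s" "st_sat (f s) = st_sat s"
    "st_cnt (f s) = st_cnt s" by (simp_all add: fs)
  have inv: "Inv (f s)"
  proof (rule InvI, simp_all only: sel)
    show "Loop = Loop \<or> (\<exists>is. Loop = Scan is)" by simp
    show "st_sat s k \<or> (\<exists>is. Loop = Scan is \<and> k \<in> set is)"
      if "cntd k" "body k \<inter> st_Y s \<noteq> {}" for k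
      using D(7)[OF that] ph by auto
    show "k < RL" if "Loop = Scan js" "k \<in> set js" for js k using that by auto
    show "body k \<inter> st_Y s \<noteq> {}" if "Loop = Scan js" "k \<in> set js" for js k
      using that by auto
  qed (rule D; assumption)+
  moreover have "M (f s) < M s" unfolding M_def sel using ph by simp
  ultimately show ?thesis by simp
qed

end



context alg begin

lemma loop:
  "Inv s \<Longrightarrow> \<exists>n \<le> M s. st_phase ((f^^n) s) = Done \<and> st_Y ((f^^n) s) \<subseteq> X \<and>
     st_Y ((f^^n) s) \<in> Afam (set qs) (rules_of rs) \<and>
     (\<forall>z\<in>X - st_Y ((f^^n) s). \<exists>k. cntd k \<and> head k = z \<and> body k \<inter> st_Y ((f^^n) s) = {})"
proof (induction "M s" arbitrary: s rule: less_induct)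
  case less
  note I = less.prems
  note D = InvD[OF I]
  have cases: "(st_phase s = Loop \<and> st_queue s = []) \<or> (Inv (f s) \<and> M (f s) < M s)"
  proof (cases "st_phase s = Loop")
    case True
    show ?thesis
    proof (cases "st_queue s")
      case Nil then show ?thesis using True by simp
    next
      case (Cons p ps) then show ?thesis using caseA[OF I True] caseB[OF I True] by blast
    qed
  next
    case False
    then obtain js where ph: "st_phase s = Scan js" using D(1) by blast
    show ?thesis
    proof (cases js)
      case Nil then show ?thesis using caseE[OF I] ph by simp
    next
      case (Cons i is') then show ?thesis using caseC[OF I] caseD[OF I] ph by blast
    qed
  qed
  then show ?case
  proof
    assume a: "st_phase s = Loop \<and> st_queue s = []"
    have fs: "f s = s\<lparr>st_phase := Done\<rparr>" using a by (simp add: mstep_def)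
    have M1: "1 \<le> M s" by (simp add: M_def)
    have fin: "\<forall>z\<in>X - st_Y s. \<exists>k. cntd k \<and> head k = z \<and> body k \<inter> st_Y s = {}"
    proof
      fix z assume z: "z \<in> X - st_Y s"
      have "st_cnt s z \<noteq> 0" using D(10)[of z] z a by auto
      then have "card {k. cntd k \<and> \<not> st_sat s k \<and> head k = z} \<noteq> 0" using D(6)[of z] by simp
      then obtain k where k: "cntd k" "\<not> st_sat s k" "head k = z" by (metis (mono_tags, lifting) card.empty empty_Collect_eq)
      have "body k \<inter> st_Y s = {}" using D(7)[OF k(1)] k(2) a by auto
      then show "\<exists>k. cntd k \<and> head k = z \<and> body k \<inter> st_Y s = {}" using k by blast
    qed
    show ?case
      by (rule exI[of _ 1]) (use M1 fs fin D(13,14) in simp)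
  next
    assume a: "Inv (f s) \<and> M (f s) < M s"
    then obtain n where n: "n \<le> M (f s)" "st_phase ((f^^n) (f s)) = Done \<and> st_Y ((f^^n) (f s)) \<subseteq> X \<and>
     st_Y ((f^^n) (f s)) \<in> Afam (set qs) (rules_of rs) \<and>
     (\<forall>z\<in>X - st_Y ((f^^n) (f s)). \<exists>k. cntd k \<and> head k = z \<and> body k \<inter> st_Y ((f^^n) (f s)) = {})"
      using less.hyps[of "f s"] by blast
    have e: "(f^^Suc n) s = (f^^n) (f s)" by (simp only: funpow_Suc_right o_apply)
    show ?case
      by (rule exI[of _ "Suc n"]) (use n a e in simp)
  qed
qed

lemma Inv_S3: "Inv S3"
proof (rule InvI, simp_all add: S3_def)
  show "cntI RL q = card {k. cntd k \<and> head k = q}" for q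
    unfolding cntI_def cntdI_def head_def by (rule arg_cong[where f=card]) auto
  show "cntI RL x = 0 \<Longrightarrow> x \<in> X \<Longrightarrow> x \<in> set qs" for x using XQ by auto
  show "{} \<in> Afam (set qs) (rules_of rs)" by (rule Afam_empty)
qed

lemma sum_occ: "finite A \<Longrightarrow> (\<Sum>a\<in>A. length (occI i a)) \<le> (\<Sum>k<i. length (fst (rs!k)))"
proof (induction i)
  case 0 then show ?case by (simp add: occI_def)
next
  case (Suc i)
  have o: "length (occI (Suc i) a) = (if a \<in> set (fst (rs!i)) then 1 else 0) + length (occI i a)" for a
    by (simp add: occI_def)
  have "(\<Sum>a\<in>A. (if a \<in> set (fst (rs!i)) then 1 else 0::nat)) = card {a \<in> A. a \<in> set (fst (rs!i))}"
    using Suc.prems by (simp add: sum.inter_filter[symmetric])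
  also have "\<dots> \<le> card (set (fst (rs!i)))" by (rule card_mono) auto
  also have "\<dots> \<le> length (fst (rs!i))" by (rule card_length)
  finally have h: "(\<Sum>a\<in>A. (if a \<in> set (fst (rs!i)) then 1 else 0::nat)) \<le> length (fst (rs!i))" .
  show ?case unfolding o sum.distrib using h Suc by simp
qed

lemma rsize_eq: "rsize (rules_of rs) = T1 RL"
proof -
  let ?g = "\<lambda>(as::'a list, q::'a). (set as, q)"
  have inj: "inj_on ?g (set rs)" and drs: "distinct rs" using dr by (auto simp: distinct_map)
  have "rsize (rules_of rs) = (\<Sum>x\<in>set rs. card (fst (?g x)) + 1)"
    unfolding rsize_def rules_of_def by (simp add: sum.reindex[OF inj] comp_def)
  also have "\<dots> = sum_list (map (\<lambda>x. card (fst (?g x)) + 1) rs)"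
    using drs by (simp add: sum.distinct_set_conv_list)
  also have "\<dots> = (\<Sum>k = 0..<RL. card (set (fst (rs!k))) + 1)"
    by (simp add: sum_list_sum_nth, rule sum.cong) (auto split: prod.splits)
  also have "\<dots> = (\<Sum>k<RL. length (fst (rs!k)) + 1)"
    by (rule sum.cong) (auto simp: distinct_card das')
  finally show ?thesis by (simp add: T1_def)
qed

lemma main:
  assumes "rsize (rules_of rs) \<ge> card (set qs)"
  shows "\<exists>n \<le> 5 * rsize (rules_of rs) + 5.
            st_phase (run qs rs X n) = Done \<and>
            st_Y (run qs rs X n) = interior (set qs) (rules_of rs) X"
proof -
  define N0 where "N0 = T1 RL + 1 + length qs + 1"
  obtain n where n: "n \<le> M S3" "st_phase ((f^^n) S3) = Done" "st_Y ((f^^n) S3) \<subseteq> X"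
     "st_Y ((f^^n) S3) \<in> Afam (set qs) (rules_of rs)"
     "\<forall>z\<in>X - st_Y ((f^^n) S3). \<exists>k. cntd k \<and> head k = z \<and> body k \<inter> st_Y ((f^^n) S3) = {}"
    using loop[OF Inv_S3] by blast
  have r0: "(f^^N0) init_state = S3" using run_S3 unfolding run_def N0_def .
  have run: "run qs rs X (n + N0) = (f^^n) S3"
    unfolding run_def funpow_add o_apply r0 ..
  have int: "interior (set qs) (rules_of rs) X = st_Y ((f^^n) S3)"
  proof (rule interior_char[OF n(4) n(3)], intro ballI)
    fix z assume "z \<in> X - st_Y ((f^^n) S3)"
    then obtain k where k: "cntd k" "head k = z" "body k \<inter> st_Y ((f^^n) S3) = {}" using n(5) by blast
    have "(body k, z) \<in> rules_of rs" using rules_ofI[OF cntd_lt[OF k(1)]] k(2) by simp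
    moreover have "z \<notin> body k" using k(1,2) by (simp add: cntdI_def body_def head_def)
    ultimately show "\<exists>A. (A, z) \<in> rules_of rs \<and> z \<notin> A \<and> A \<inter> st_Y ((f^^n) S3) = {}"
      using k(3) by blast
  qed
  let ?L = "\<Sum>k<RL. length (fst (rs!k))"
  have T1L: "T1 RL = ?L + RL" unfolding T1_def sum.distrib by simp
  have lqs: "length qs = card (set qs)" using dq by (simp add: distinct_card)
  have b1: "length (st_queue S3) \<le> length qs" by (simp add: S3_def)
  have b2: "card {k. cntd k \<and> \<not> st_sat S3 k} \<le> RL"
    by (rule order_trans[OF card_mono[of "{..<RL}"]]) (auto simp: cntdI_def)
  have b3: "(\<Sum>a\<in>set qs - st_Y S3. length (occ0 a) + 1) \<le> ?L + length qs"
  proof -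
    have "(\<Sum>a\<in>set qs - st_Y S3. length (occ0 a) + 1) = (\<Sum>a\<in>set qs. length (occ0 a)) + card (set qs)"
    proof -
      have Y: "st_Y S3 = {}" by (simp add: S3_def)
      show ?thesis unfolding Y Diff_empty sum.distrib by simp
    qed
    also have "\<dots> \<le> ?L + length qs" using sum_occ[of "set qs" RL] lqs by simp
    finally show ?thesis .
  qed
  have MS3: "M S3 \<le> 1 + length qs + RL + (?L + length qs)"
  proof -
    have e: "M S3 = 1 + length (st_queue S3) + card {k. cntd k \<and> \<not> st_sat S3 k}
    + (\<Sum>a\<in>set qs - st_Y S3. length (occ0 a) + 1)" by (simp add: M_def S3_def)
    show ?thesis using e b1 b2 b3 by linarith
  qed
  have bound: "n + N0 \<le> 5 * rsize (rules_of rs) + 5"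
    using n(1) MS3 T1L assms lqs unfolding N0_def rsize_eq by linarith
  show ?thesis
    by (rule exI[of _ "n + N0"]) (use bound run n(2) int in simp)
qed

end

theorem theorem3p3:
  "\<exists>c::nat. \<forall>(qs :: 'a list) (rs :: ('a list \<times> 'a) list) (X :: 'a set).
     distinct qs \<and>
     (\<forall>(as, q) \<in> set rs. distinct as) \<and>
     distinct (map (\<lambda>(as, q). (set as, q)) rs) \<and>
     (\<forall>r \<in> rules_of rs. rule_on (set qs) r) \<and>
     X \<subseteq> set qs \<and>
     rsize (rules_of rs) \<ge> card (set qs)
     \<longrightarrow> (\<exists>n \<le> c * rsize (rules_of rs) + c.
            st_phase (run qs rs X n) = Done \<and>
            st_Y (run qs rs X n) = interior (set qs) (rules_of rs) X)"
proof (rule exI[of _ 5], intro allI impI)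
  fix qs :: "'a list" and rs :: "('a list \<times> 'a) list" and X :: "'a set"
  assume h: "distinct qs \<and>
     (\<forall>(as, q) \<in> set rs. distinct as) \<and>
     distinct (map (\<lambda>(as, q). (set as, q)) rs) \<and>
     (\<forall>r \<in> rules_of rs. rule_on (set qs) r) \<and>
     X \<subseteq> set qs \<and>
     rsize (rules_of rs) \<ge> card (set qs)"
  interpret alg qs rs X using h by unfold_locales auto
  show "\<exists>n \<le> 5 * rsize (rules_of rs) + 5.
            st_phase (run qs rs X n) = Done \<and>
            st_Y (run qs rs X n) = interior (set qs) (rules_of rs) X"
    using main h by blast
qed


end
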